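(* Let $(H,\mu_H,\Delta_H,\alpha_H)$ be a Hom-bialgebra and $(A,\mu_A,\alpha_A)$ a left $H$-module Hom-algebra with action $h\otimes a\mapsto h\cdot a$, with $\alpha_H,\alpha_A$ bijective. Assume moreover that $(A,\alpha_A)$ is a left $H$-comodule with structure $a\mapsto a_{(-1)}\otimes a_{(0)}$ such that $(A,\mu_A,\alpha_A)$ is a left $H$-comodule Hom-algebra and $(A,\alpha_A)$ is a left-left Yetter-Drinfeld module over $H$. Then the Hom-smash product $A\# H$ is an $H$-bicomodule Hom-algebra via $\rho_{A\# H}(a\# h)=(\alpha_A(a)\# h_1)\otimes h_2$ and $\lambda_{A\# H}:A\# H\to H\otimes(A\# H)$, $\lambda_{A\# H}(a\# h)=a_{(-1)}h_1\otimes(a_{(0)}\# h_2)$.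
   Context: Over a field $k$, no (co)units assumed; $\Delta(h)=h_1\otimes h_2$. Hom-associative algebra $(A,\mu,\alpha)$: $\alpha(aa')=\alpha(a)\alpha(a')$, $\alpha(a)(a'a'')=(aa')\alpha(a'')$; morphisms commute with structure maps and multiplications; tensor products of Hom-associative algebras are componentwise. Hom-bialgebra $(H,\mu,\Delta,\alpha)$: $(H,\mu,\alpha)$ Hom-associative, $\Delta(h_1)\otimes\alpha(h_2)=\alpha(h_1)\otimes\Delta(h_2)$, $\Delta(hh')=h_1h'_1\otimes h_2h'_2$, $\Delta(\alpha(h))=\alpha(h_1)\otimes\alpha(h_2)$. Left $H$-module Hom-algebra: Hom-associative $(A,\mu_A,\alpha_A)$ with action satisfying $\alpha_A(h\cdot a)=\alpha_H(h)\cdot\alpha_A(a)$, $\alpha_H(h)\cdot(h'\cdot a)=(hh')\cdot\alpha_A(a)$, $\alpha_H^2(h)\cdot(aa')=(h_1\cdot a)(h_2\cdot a')$. Hom-smash product $A\# H$: $A\otimes H$, structure map $\alpha_A\otimes\alpha_H$, product $(a\# h)(a'\# h')=a(\alpha_H^{-2}(h_1)\cdot\alpha_A^{-1}(a'))\#\alpha_H^{-1}(h_2)h'$. A left $H$-comodule structure on $(M,\alpha_M)$ is $\lambda:M\to H\otimes M$ with $(\alpha_H\otimes\alpha_M)\circ\lambda=\lambda\circ\alpha_M$ and $(\Delta_H\otimes\alpha_M)\circ\lambda=(\alpha_H\otimes\lambda)\circ\lambda$; a right one is $\rho:M\to M\otimes H$ with $(\alpha_M\otimes\alpha_H)\circ\rho=\rho\circ\alpha_M$,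 $(\alpha_M\otimes\Delta_H)\circ\rho=(\rho\otimes\alpha_H)\circ\rho$; $M$ is an $H$-bicomodule if it has both and $(\lambda\otimes\alpha_H)\circ\rho=(\alpha_H\otimes\rho)\circ\lambda$. A left (right) $H$-comodule Hom-algebra is a Hom-associative algebra with a left (right) comodule structure that is a morphism of Hom-associative algebras into $H\otimes D$ ($D\otimes H$); an $H$-bicomodule Hom-algebra is both a left and right $H$-comodule Hom-algebra whose structures form an $H$-bicomodule. A left-left Yetter-Drinfeld module over $H$ is $(M,\alpha_M)$ that is a left $H$-module (action with $\alpha_M(h\cdot m)=\alpha_H(h)\cdot\alpha_M(m)$, $\alpha_H(h)\cdot(h'\cdot m)=(hh')\cdot\alpha_M(m)$) and a left $H$-comodule $m\mapsto m_{(-1)}\otimes m_{(0)}$ such that $(h_1\cdot m)_{(-1)}\alpha_H^2(h_2)\otimes(h_1\cdot m)_{(0)}=\alpha_H^2(h_1)\alpha_H(m_{(-1)})\otimes\alpha_H(h_2)\cdot m_{(0)}$. *)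

theory Defs
  imports "HOL-Library.Poly_Mapping"
begin

(* Vector spaces over a field 'k are modelled by their bases: a k-vector space
with basis indexed by the type 'i is the space of finitely supported functions
'i \<Rightarrow>\<^sub>0 'k.  The tensor product of the spaces with bases 'a and 'b is the
space with basis 'a \<times> 'b. *)

type_synonym ('i, 'k) vs = "'i \<Rightarrow>\<^sub>0 'k"

definition smul :: "'k::field \<Rightarrow> ('i \<Rightarrow>\<^sub>0 'k) \<Rightarrow> ('i \<Rightarrow>\<^sub>0 'k)" where
  "smul c x = Poly_Mapping.map (\<lambda>t. c * t) x"

definition linmap :: "(('a \<Rightarrow>\<^sub>0 'k::field) \<Rightarrow> ('b \<Rightarrow>\<^sub>0 'k)) \<Rightarrow> bool" where
  "linmap f \<longleftrightarrow> (\<forall>x y. f (x + y) = f x + f y) \<and> (\<forall>c x. f (smul c x) = smul c (f x))"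

definition linext :: "('a \<Rightarrow> ('b \<Rightarrow>\<^sub>0 'k::field)) \<Rightarrow> ('a \<Rightarrow>\<^sub>0 'k) \<Rightarrow> ('b \<Rightarrow>\<^sub>0 'k)" where
  "linext g x = (\<Sum>i\<in>Poly_Mapping.keys x. smul (Poly_Mapping.lookup x i) (g i))"

definition bvec :: "'a \<Rightarrow> ('a \<Rightarrow>\<^sub>0 'k::field)" where
  "bvec a = Poly_Mapping.single a 1"

definition tensor :: "('a \<Rightarrow>\<^sub>0 'k::field) \<Rightarrow> ('b \<Rightarrow>\<^sub>0 'k) \<Rightarrow> ('a \<times> 'b \<Rightarrow>\<^sub>0 'k)" where
  "tensor x y = Abs_poly_mapping (\<lambda>(a, b). Poly_Mapping.lookup x a * Poly_Mapping.lookup y b)"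

definition tmap :: "(('a \<Rightarrow>\<^sub>0 'k::field) \<Rightarrow> ('c \<Rightarrow>\<^sub>0 'k)) \<Rightarrow> (('b \<Rightarrow>\<^sub>0 'k) \<Rightarrow> ('d \<Rightarrow>\<^sub>0 'k))
    \<Rightarrow> ('a \<times> 'b \<Rightarrow>\<^sub>0 'k) \<Rightarrow> ('c \<times> 'd \<Rightarrow>\<^sub>0 'k)" where
  "tmap f g = linext (\<lambda>(a, b). tensor (f (bvec a)) (g (bvec b)))"

definition reidx :: "('a \<Rightarrow> 'b) \<Rightarrow> ('a \<Rightarrow>\<^sub>0 'k::field) \<Rightarrow> ('b \<Rightarrow>\<^sub>0 'k)" where
  "reidx f = linext (\<lambda>a. bvec (f a))"

definition tassoc :: "(('a \<times> 'b) \<times> 'c \<Rightarrow>\<^sub>0 'k::field) \<Rightarrow> ('a \<times> ('b \<times> 'c) \<Rightarrow>\<^sub>0 'k)" where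
  "tassoc = reidx (\<lambda>((a, b), c). (a, (b, c)))"

definition tassoc' :: "('a \<times> ('b \<times> 'c) \<Rightarrow>\<^sub>0 'k::field) \<Rightarrow> (('a \<times> 'b) \<times> 'c \<Rightarrow>\<^sub>0 'k)" where
  "tassoc' = reidx (\<lambda>(a, (b, c)). ((a, b), c))"

definition tmid :: "(('a \<times> 'b) \<times> ('c \<times> 'd) \<Rightarrow>\<^sub>0 'k::field) \<Rightarrow> (('a \<times> 'c) \<times> ('b \<times> 'd) \<Rightarrow>\<^sub>0 'k)" where
  "tmid = reidx (\<lambda>((a, b), (c, d)). ((a, c), (b, d)))"

definition tensor_mul :: "(('a \<times> 'a \<Rightarrow>\<^sub>0 'k::field) \<Rightarrow> ('a \<Rightarrow>\<^sub>0 'k)) \<Rightarrow> (('b \<times> 'b \<Rightarrow>\<^sub>0 'k) \<Rightarrow> ('b \<Rightarrow>\<^sub>0 'k))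
    \<Rightarrow> (('a \<times> 'b) \<times> ('a \<times> 'b) \<Rightarrow>\<^sub>0 'k) \<Rightarrow> ('a \<times> 'b \<Rightarrow>\<^sub>0 'k)" where
  "tensor_mul m1 m2 z = tmap m1 m2 (tmid z)"

definition hom_assoc :: "(('a \<times> 'a \<Rightarrow>\<^sub>0 'k::field) \<Rightarrow> ('a \<Rightarrow>\<^sub>0 'k)) \<Rightarrow> (('a \<Rightarrow>\<^sub>0 'k) \<Rightarrow> ('a \<Rightarrow>\<^sub>0 'k)) \<Rightarrow> bool" where
  "hom_assoc mu al \<longleftrightarrow> linmap mu \<and> linmap al \<and>
     (\<forall>a a'. al (mu (tensor a a')) = mu (tensor (al a) (al a'))) \<and>
     (\<forall>a a' a''. mu (tensor (al a) (mu (tensor a' a''))) = mu (tensor (mu (tensor a a')) (al a'')))"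

definition hom_alg_morphism :: "(('a \<times> 'a \<Rightarrow>\<^sub>0 'k::field) \<Rightarrow> ('a \<Rightarrow>\<^sub>0 'k)) \<Rightarrow> (('a \<Rightarrow>\<^sub>0 'k) \<Rightarrow> ('a \<Rightarrow>\<^sub>0 'k))
    \<Rightarrow> (('b \<times> 'b \<Rightarrow>\<^sub>0 'k) \<Rightarrow> ('b \<Rightarrow>\<^sub>0 'k)) \<Rightarrow> (('b \<Rightarrow>\<^sub>0 'k) \<Rightarrow> ('b \<Rightarrow>\<^sub>0 'k))
    \<Rightarrow> (('a \<Rightarrow>\<^sub>0 'k) \<Rightarrow> ('b \<Rightarrow>\<^sub>0 'k)) \<Rightarrow> bool" where
  "hom_alg_morphism mu al mu' al' f \<longleftrightarrow> linmap f \<and>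
     (\<forall>a. f (al a) = al' (f a)) \<and>
     (\<forall>a a'. f (mu (tensor a a')) = mu' (tensor (f a) (f a')))"

definition hom_bialgebra :: "(('i \<times> 'i \<Rightarrow>\<^sub>0 'k::field) \<Rightarrow> ('i \<Rightarrow>\<^sub>0 'k)) \<Rightarrow> (('i \<Rightarrow>\<^sub>0 'k) \<Rightarrow> ('i \<times> 'i \<Rightarrow>\<^sub>0 'k))
    \<Rightarrow> (('i \<Rightarrow>\<^sub>0 'k) \<Rightarrow> ('i \<Rightarrow>\<^sub>0 'k)) \<Rightarrow> bool" where
  "hom_bialgebra mu de al \<longleftrightarrow> hom_assoc mu al \<and> linmap de \<and>
     (\<forall>h. tassoc (tmap de al (de h)) = tmap al de (de h)) \<and>
     (\<forall>h h'. de (mu (tensor h h')) = tensor_mul mu mu (tensor (de h) (de h'))) \<and>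
     (\<forall>h. de (al h) = tmap al al (de h))"

definition left_module :: "(('i \<times> 'i \<Rightarrow>\<^sub>0 'k::field) \<Rightarrow> ('i \<Rightarrow>\<^sub>0 'k)) \<Rightarrow> (('i \<Rightarrow>\<^sub>0 'k) \<Rightarrow> ('i \<Rightarrow>\<^sub>0 'k))
    \<Rightarrow> (('j \<Rightarrow>\<^sub>0 'k) \<Rightarrow> ('j \<Rightarrow>\<^sub>0 'k)) \<Rightarrow> (('i \<times> 'j \<Rightarrow>\<^sub>0 'k) \<Rightarrow> ('j \<Rightarrow>\<^sub>0 'k)) \<Rightarrow> bool" where
  "left_module muH alH alM act \<longleftrightarrow> linmap alM \<and> linmap act \<and>
     (\<forall>h m. alM (act (tensor h m)) = act (tensor (alH h) (alM m))) \<and>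
     (\<forall>h h' m. act (tensor (alH h) (act (tensor h' m))) = act (tensor (muH (tensor h h')) (alM m)))"

definition module_hom_algebra :: "(('i \<times> 'i \<Rightarrow>\<^sub>0 'k::field) \<Rightarrow> ('i \<Rightarrow>\<^sub>0 'k)) \<Rightarrow> (('i \<Rightarrow>\<^sub>0 'k) \<Rightarrow> ('i \<times> 'i \<Rightarrow>\<^sub>0 'k))
    \<Rightarrow> (('i \<Rightarrow>\<^sub>0 'k) \<Rightarrow> ('i \<Rightarrow>\<^sub>0 'k))
    \<Rightarrow> (('j \<times> 'j \<Rightarrow>\<^sub>0 'k) \<Rightarrow> ('j \<Rightarrow>\<^sub>0 'k)) \<Rightarrow> (('j \<Rightarrow>\<^sub>0 'k) \<Rightarrow> ('j \<Rightarrow>\<^sub>0 'k))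
    \<Rightarrow> (('i \<times> 'j \<Rightarrow>\<^sub>0 'k) \<Rightarrow> ('j \<Rightarrow>\<^sub>0 'k)) \<Rightarrow> bool" where
  "module_hom_algebra muH deH alH muA alA act \<longleftrightarrow> hom_assoc muA alA \<and>
     left_module muH alH alA act \<and>
     (\<forall>h a a'. act (tensor (alH (alH h)) (muA (tensor a a'))) =
               muA (tmap act act (tmid (tensor (deH h) (tensor a a')))))"

definition left_comodule :: "(('i \<Rightarrow>\<^sub>0 'k::field) \<Rightarrow> ('i \<times> 'i \<Rightarrow>\<^sub>0 'k)) \<Rightarrow> (('i \<Rightarrow>\<^sub>0 'k) \<Rightarrow> ('i \<Rightarrow>\<^sub>0 'k))
    \<Rightarrow> (('j \<Rightarrow>\<^sub>0 'k) \<Rightarrow> ('j \<Rightarrow>\<^sub>0 'k)) \<Rightarrow> (('j \<Rightarrow>\<^sub>0 'k) \<Rightarrow> ('i \<times> 'j \<Rightarrow>\<^sub>0 'k)) \<Rightarrow> bool" where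
  "left_comodule deH alH alM la \<longleftrightarrow> linmap alM \<and> linmap la \<and>
     (\<forall>m. tmap alH alM (la m) = la (alM m)) \<and>
     (\<forall>m. tassoc (tmap deH alM (la m)) = tmap alH la (la m))"

definition right_comodule :: "(('i \<Rightarrow>\<^sub>0 'k::field) \<Rightarrow> ('i \<times> 'i \<Rightarrow>\<^sub>0 'k)) \<Rightarrow> (('i \<Rightarrow>\<^sub>0 'k) \<Rightarrow> ('i \<Rightarrow>\<^sub>0 'k))
    \<Rightarrow> (('j \<Rightarrow>\<^sub>0 'k) \<Rightarrow> ('j \<Rightarrow>\<^sub>0 'k)) \<Rightarrow> (('j \<Rightarrow>\<^sub>0 'k) \<Rightarrow> ('j \<times> 'i \<Rightarrow>\<^sub>0 'k)) \<Rightarrow> bool" where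
  "right_comodule deH alH alM rh \<longleftrightarrow> linmap alM \<and> linmap rh \<and>
     (\<forall>m. tmap alM alH (rh m) = rh (alM m)) \<and>
     (\<forall>m. tmap alM deH (rh m) = tassoc (tmap rh alH (rh m)))"

definition bicomodule :: "(('i \<Rightarrow>\<^sub>0 'k::field) \<Rightarrow> ('i \<times> 'i \<Rightarrow>\<^sub>0 'k)) \<Rightarrow> (('i \<Rightarrow>\<^sub>0 'k) \<Rightarrow> ('i \<Rightarrow>\<^sub>0 'k))
    \<Rightarrow> (('j \<Rightarrow>\<^sub>0 'k) \<Rightarrow> ('j \<Rightarrow>\<^sub>0 'k)) \<Rightarrow> (('j \<Rightarrow>\<^sub>0 'k) \<Rightarrow> ('i \<times> 'j \<Rightarrow>\<^sub>0 'k))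
    \<Rightarrow> (('j \<Rightarrow>\<^sub>0 'k) \<Rightarrow> ('j \<times> 'i \<Rightarrow>\<^sub>0 'k)) \<Rightarrow> bool" where
  "bicomodule deH alH alM la rh \<longleftrightarrow> left_comodule deH alH alM la \<and> right_comodule deH alH alM rh \<and>
     (\<forall>m. tassoc (tmap la alH (rh m)) = tmap alH rh (la m))"

definition left_comodule_hom_algebra where
  "left_comodule_hom_algebra muH deH alH muD alD la \<longleftrightarrow> hom_assoc muD alD \<and>
     left_comodule deH alH alD la \<and>
     hom_alg_morphism muD alD (tensor_mul muH muD) (tmap alH alD) la"

definition right_comodule_hom_algebra where
  "right_comodule_hom_algebra muH deH alH muD alD rh \<longleftrightarrow> hom_assoc muD alD \<and>
     right_comodule deH alH alD rh \<and>
     hom_alg_morphism muD alD (tensor_mul muD muH) (tmap alD alH) rh"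

definition bicomodule_hom_algebra where
  "bicomodule_hom_algebra muH deH alH muD alD la rh \<longleftrightarrow>
     left_comodule_hom_algebra muH deH alH muD alD la \<and>
     right_comodule_hom_algebra muH deH alH muD alD rh \<and>
     bicomodule deH alH alD la rh"

(* Left-left Yetter-Drinfeld module:
(h_1\<cdot>m)_{(-1)} \<alpha>_H^2(h_2) \<otimes> (h_1\<cdot>m)_{(0)} = \<alpha>_H^2(h_1)\<alpha>_H(m_{(-1)}) \<otimes> \<alpha>_H(h_2)\<cdot>m_{(0)}. *)
definition yd_module where
  "yd_module muH deH alH alM act la \<longleftrightarrow> left_module muH alH alM act \<and>
     left_comodule deH alH alM la \<and>
     (\<forall>h m.
        tmap muH id
          (reidx (\<lambda>((x, z), y). ((x, y), z))
            (tmap la id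
              (tmap act (alH \<circ> alH)
                (reidx (\<lambda>((a, b), c). ((a, c), b)) (tensor (deH h) m)))))
      = tmap (\<lambda>u. muH (tmap (alH \<circ> alH) alH u)) (\<lambda>v. act (tmap alH id v))
          (tmid (tensor (deH h) (la m))))"

(* Hom-smash product A # H = A \<otimes> H:
(a # h)(a' # h') = a(\<alpha>_H^{-2}(h_1)\<cdot>\<alpha>_A^{-1}(a')) # \<alpha>_H^{-1}(h_2)h',
extended linearly from basis vectors. *)
definition smash_term where
  "smash_term muH deH alH muA alA act a h a' h' =
     tmap (\<lambda>u. muA (tensor a (act (tensor (inv alH (inv alH u)) (inv alA a')))))
          (\<lambda>v. muH (tensor (inv alH v) h'))
          (deH h)"

definition smash_mul where
  "smash_mul muH deH alH muA alA act =
     linext (\<lambda>((a, h), (a', h')). smash_term muH deH alH muA alA act (bvec a) (bvec h) (bvec a') (bvec h'))"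

definition smash_rho where
  "smash_rho deH alA z = tassoc' (tmap alA deH z)"

definition smash_lambda where
  "smash_lambda muH deH la z = tmap muH id (tmid (tmap la deH z))"

end

theory Submission
  imports Defs
begin

lemma lookup_smul[simp]: "Poly_Mapping.lookup (smul c x) i = c * Poly_Mapping.lookup x i"
  unfolding smul_def by (simp add: map.rep_eq when_def)

lemma smul_add: "smul c (x + y) = smul c x + smul c y"
  by (rule poly_mapping_eqI) (simp add: lookup_add distrib_left)
lemma smul_add2: "smul (c + d) x = smul c x + smul d x"
  by (rule poly_mapping_eqI) (simp add: lookup_add distrib_right)
lemma smul_smul: "smul c (smul d x) = smul (c*d) x"
  by (rule poly_mapping_eqI) simp
lemma smul_one[simp]: "smul 1 x = x"
  by (rule poly_mapping_eqI) simp
lemma smul_zero[simp]: "smul c 0 = 0" "smul 0 x = 0"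
  by (rule poly_mapping_eqI, simp)+
lemma smul_sum: "smul c (sum f S) = sum (\<lambda>i. smul c (f i)) S"
  by (induction S rule: infinite_finite_induct) (auto simp: smul_add)

lemma keys_smul: "Poly_Mapping.keys (smul c x) \<subseteq> Poly_Mapping.keys x"
  by (auto simp: in_keys_iff)

lemma linext_superset:
  assumes "finite S" "Poly_Mapping.keys x \<subseteq> S"
  shows "linext g x = (\<Sum>i\<in>S. smul (Poly_Mapping.lookup x i) (g i))"
  unfolding linext_def
  by (rule sum.mono_neutral_left) (use assms in \<open>auto simp: in_keys_iff\<close>)

lemma linext_add: "linext g (x + y) = linext g x + linext g y"
proof -
  have S: "finite (Poly_Mapping.keys x \<union> Poly_Mapping.keys y)" "Poly_Mapping.keys (x+y) \<subseteq> Poly_Mapping.keys x \<union> Poly_Mapping.keys y"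
    by (auto simp: keys_add)
  show ?thesis
    by (simp add: linext_superset[OF S] linext_superset[OF S(1)] lookup_add smul_add2 sum.distrib)
qed

lemma linext_smul: "linext g (smul c x) = smul c (linext g x)"
proof -
  have S: "finite (Poly_Mapping.keys x)" "Poly_Mapping.keys (smul c x) \<subseteq> Poly_Mapping.keys x"
    by (auto simp: keys_smul)
  show ?thesis
    by (simp add: linext_superset[OF S] linext_superset[OF S(1)] smul_sum smul_smul)
qed

lemma linmap_linext[simp]: "linmap (linext g)"
  by (simp add: linmap_def linext_add linext_smul)

lemma linext_bvec[simp]: "linext g (bvec a) = g a"
  by (simp add: linext_def bvec_def)

lemma linmap_add: "linmap f \<Longrightarrow> f (x + y) = f x + f y"
  by (simp add: linmap_def)
lemma linmap_smul: "linmap f \<Longrightarrow> f (smul c x) = smul c (f x)"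
  by (simp add: linmap_def)
lemma linmap_zero: "linmap f \<Longrightarrow> f 0 = 0"
  using linmap_smul[of f 0 0] by simp
lemma linmap_sum: "linmap f \<Longrightarrow> f (sum g S) = (\<Sum>i\<in>S. f (g i))"
  by (induction S rule: infinite_finite_induct) (auto simp: linmap_zero linmap_add)

lemma vec_expand: "x = (\<Sum>i\<in>Poly_Mapping.keys x. smul (Poly_Mapping.lookup x i) (bvec i))"
proof (rule poly_mapping_eqI)
  fix k
  have "(\<Sum>i\<in>Poly_Mapping.keys x. Poly_Mapping.lookup x i * Poly_Mapping.lookup (bvec i) k)
     = (\<Sum>i\<in>Poly_Mapping.keys x. if i = k then Poly_Mapping.lookup x i else 0)"
    by (rule sum.cong) (auto simp: bvec_def lookup_single when_def)
  also have "\<dots> = Poly_Mapping.lookup x k"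
    by (simp add: sum.delta' in_keys_iff)
  finally show "Poly_Mapping.lookup x k = Poly_Mapping.lookup (\<Sum>i\<in>Poly_Mapping.keys x. smul (Poly_Mapping.lookup x i) (bvec i)) k"
    by (simp add: lookup_sum)
qed

lemma linmap_linext_eq: "linmap f \<Longrightarrow> f x = linext (\<lambda>i. f (bvec i)) x"
proof -
  assume f: "linmap f"
  have "f x = f (\<Sum>i\<in>Poly_Mapping.keys x. smul (Poly_Mapping.lookup x i) (bvec i))"
    by (rule arg_cong[where f=f, OF vec_expand])
  then show ?thesis by (simp add: linmap_sum linmap_smul linext_def f)
qed

lemma lin_id[simp]: "linmap (\<lambda>x. x)"
  by (simp add: linmap_def)

lemma linext_bvec_id[simp]: "linext bvec x = x"
  by (rule linmap_linext_eq[OF lin_id, symmetric])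

lemma lin_eq:
  assumes "linmap f" "linmap g" "\<And>i. f (bvec i) = g (bvec i)"
  shows "f x = g x"
proof -
  have "f x = linext (\<lambda>i. f (bvec i)) x" by (rule linmap_linext_eq[OF assms(1)])
  also have "\<dots> = linext (\<lambda>i. g (bvec i)) x" using assms(3) by simp
  also have "\<dots> = g x" by (rule linmap_linext_eq[OF assms(2), symmetric])
  finally show ?thesis .
qed

lemma lin_comp: "linmap f \<Longrightarrow> linmap g \<Longrightarrow> linmap (\<lambda>x. f (g x))"
  by (simp add: linmap_def)
lemma lin_add_fun[simp]: "linmap f \<Longrightarrow> linmap g \<Longrightarrow> linmap (\<lambda>x. f x + g x)"
  by (simp add: linmap_def smul_add)

lemma lin_linext_arg[simp]: "linmap g \<Longrightarrow> linmap (\<lambda>x. linext F (g x))"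
  by (rule lin_comp[OF linmap_linext])

lemma lin_linext_fun[simp]: "(\<And>i. linmap (F i)) \<Longrightarrow> linmap (\<lambda>x. linext (\<lambda>i. F i x) z)"
  unfolding linmap_def linext_def
  by (auto simp: sum.distrib smul_add smul_sum smul_smul mult.commute)

lemma tensor_fin: "finite {ab. (case ab of (a,b) \<Rightarrow> Poly_Mapping.lookup x a * Poly_Mapping.lookup (y::_\<Rightarrow>\<^sub>0 'k::field) b) \<noteq> 0}"
proof -
  have "{ab. (case ab of (a,b) \<Rightarrow> Poly_Mapping.lookup x a * Poly_Mapping.lookup y b) \<noteq> 0} \<subseteq> Poly_Mapping.keys x \<times> Poly_Mapping.keys y"
    by (auto simp: in_keys_iff)
  then show ?thesis by (rule finite_subset) auto
qed

lemma lookup_tensor[simp]: "Poly_Mapping.lookup (tensor x y) (a, b) = Poly_Mapping.lookup x a * Poly_Mapping.lookup y b"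
  unfolding tensor_def using tensor_fin[of x y] by simp

lemma lookup_tensor': "Poly_Mapping.lookup (tensor x y) p = Poly_Mapping.lookup x (fst p) * Poly_Mapping.lookup y (snd p)"
  by (cases p) simp

lemma tensor_add1: "tensor (x + x') y = tensor x y + tensor x' y"
  by (rule poly_mapping_eqI) (simp add: lookup_tensor' lookup_add distrib_right)
lemma tensor_add2: "tensor y (x + x') = tensor y x + tensor y x'"
  by (rule poly_mapping_eqI) (simp add: lookup_tensor' lookup_add distrib_left)
lemma tensor_smul1: "tensor (smul c x) y = smul c (tensor x y)"
  by (rule poly_mapping_eqI) (simp add: lookup_tensor')
lemma tensor_smul2: "tensor y (smul c x) = smul c (tensor y x)"
  by (rule poly_mapping_eqI) (simp add: lookup_tensor' mult.left_commute)

lemma lin_tensor1[simp]: "linmap g \<Longrightarrow> linmap (\<lambda>x. tensor (g x) y)"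
  by (simp add: linmap_def tensor_add1 tensor_smul1)
lemma lin_tensor2[simp]: "linmap g \<Longrightarrow> linmap (\<lambda>x. tensor y (g x))"
  by (simp add: linmap_def tensor_add2 tensor_smul2)

lemma bvec_pair: "bvec (a, b) = tensor (bvec a) (bvec b)"
  by (rule poly_mapping_eqI) (auto simp: bvec_def lookup_tensor' lookup_single when_def)

lemma lin_eq2:
  assumes "\<And>y. linmap (\<lambda>x. F x y)" "\<And>x. linmap (\<lambda>y. F x y)"
    "\<And>y. linmap (\<lambda>x. G x y)" "\<And>x. linmap (\<lambda>y. G x y)"
    "\<And>a b. F (bvec a) (bvec b) = G (bvec a) (bvec b)"
  shows "F x y = G x y"
proof -
  have *: "F (bvec a) y = G (bvec a) y" for a
    by (rule lin_eq[where f="\<lambda>y. F (bvec a) y" and g="\<lambda>y. G (bvec a) y"]) (use assms in auto)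
  show ?thesis
    by (rule lin_eq[where f="\<lambda>x. F x y" and g="\<lambda>x. G x y"]) (use assms * in auto)
qed

lemma linext_tensor: "linext F (tensor x y) = linext (\<lambda>a. linext (\<lambda>b. F (a, b)) y) x"
  by (rule lin_eq2[where F="\<lambda>x y. linext F (tensor x y)"])
     (auto simp: bvec_pair[symmetric])

(* Sweedler sums *)
definition sw :: "('a \<times> 'b \<Rightarrow>\<^sub>0 'k::field) \<Rightarrow> (('a \<Rightarrow>\<^sub>0 'k) \<Rightarrow> ('b \<Rightarrow>\<^sub>0 'k) \<Rightarrow> ('c \<Rightarrow>\<^sub>0 'k)) \<Rightarrow> ('c \<Rightarrow>\<^sub>0 'k)"
  where "sw z F = linext (\<lambda>(p, q). F (bvec p) (bvec q)) z"

lemma lin_sw_arg[simp]: "linmap g \<Longrightarrow> linmap (\<lambda>x. sw (g x) F)"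
  unfolding sw_def by (rule lin_comp[OF linmap_linext])

lemma lin_sw_fun[simp]: "(\<And>p q. linmap (F p q)) \<Longrightarrow> linmap (\<lambda>x. sw z (\<lambda>p q. F p q x))"
  unfolding sw_def
  using lin_linext_fun[of "\<lambda>i x. (case i of (p, q) \<Rightarrow> F (bvec p) (bvec q) x)" z]
  by (simp add: case_prod_beta)

lemma sw_bvec[simp]: "sw (bvec (a, b)) F = F (bvec a) (bvec b)"
  by (simp add: sw_def)

lemma sw_tensor[simp]:
  assumes "\<And>y. linmap (\<lambda>x. F x y)" "\<And>x. linmap (\<lambda>y. F x y)"
  shows "sw (tensor x y) F = F x y"
  by (rule lin_eq2[where F="\<lambda>x y. sw (tensor x y) F"])
     (use assms in \<open>auto simp: bvec_pair[symmetric]\<close>)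

lemma sw_lin: "linmap f \<Longrightarrow> f (sw z F) = sw z (\<lambda>p q. f (F p q))"
  by (rule lin_eq[where f="\<lambda>z. f (sw z F)"]) (auto intro: lin_comp[of f])

lemma sw_id: "sw z tensor = z"
  by (rule lin_eq[where f="\<lambda>z. sw z tensor"]) (auto simp: bvec_pair)

lemma sw_swap: "sw z (\<lambda>p q. sw w (\<lambda>u v. F p q u v)) = sw w (\<lambda>u v. sw z (\<lambda>p q. F p q u v))"
  by (rule lin_eq[where f="\<lambda>z. sw z (\<lambda>p q. sw w (\<lambda>u v. F p q u v))"]) auto

lemma sw_sw: "sw (sw z F) G = sw z (\<lambda>p q. sw (F p q) G)"
  by (rule sw_lin) simp

lemma tensor_sw1: "tensor (sw z F) y = sw z (\<lambda>p q. tensor (F p q) y)"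
  by (rule sw_lin[where f="\<lambda>x. tensor x y"]) simp
lemma tensor_sw2: "tensor y (sw z F) = sw z (\<lambda>p q. tensor y (F p q))"
  by (rule sw_lin[where f="\<lambda>x. tensor y x"]) simp

lemma sw_cong: "(\<And>p q. F p q = G p q) \<Longrightarrow> sw z F = sw z G"
  by (metis ext)

lemma lin_tmap[simp]: "linmap (tmap f g)"
  by (simp add: tmap_def)
lemma lin_tmap_arg[simp]: "linmap h \<Longrightarrow> linmap (\<lambda>x. tmap f g (h x))"
  by (rule lin_comp[OF lin_tmap])
lemma lin_reidx[simp]: "linmap (reidx f)"
  by (simp add: reidx_def)
lemma lin_reidx_arg[simp]: "linmap h \<Longrightarrow> linmap (\<lambda>x. reidx f (h x))"
  by (rule lin_comp[OF lin_reidx])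
lemma lin_tassoc[simp]: "linmap tassoc" "linmap tassoc'" "linmap tmid"
  by (simp_all add: tassoc_def tassoc'_def tmid_def)
lemma lin_tassoc_arg[simp]: "linmap h \<Longrightarrow> linmap (\<lambda>x. tassoc (h x))"
  by (simp add: lin_comp)
lemma lin_tassoc'_arg[simp]: "linmap h \<Longrightarrow> linmap (\<lambda>x. tassoc' (h x))"
  by (simp add: lin_comp)
lemma lin_tmid_arg[simp]: "linmap h \<Longrightarrow> linmap (\<lambda>x. tmid (h x))"
  by (simp add: lin_comp)

lemma reidx_bvec[simp]: "reidx f (bvec a) = bvec (f a)"
  by (simp add: reidx_def)

lemma tmap_sw: "linmap f \<Longrightarrow> linmap g \<Longrightarrow> tmap f g z = sw z (\<lambda>p q. tensor (f p) (g q))"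
  by (rule lin_eq[where f="tmap f g"]) (auto simp: tmap_def)

lemma tassoc_sw: "tassoc z = sw z (\<lambda>X w. sw X (\<lambda>u v. tensor u (tensor v w)))"
  by (rule lin_eq[where f="tassoc"]) (auto simp: tassoc_def bvec_pair)
lemma tassoc'_sw: "tassoc' z = sw z (\<lambda>u X. sw X (\<lambda>v w. tensor (tensor u v) w))"
  by (rule lin_eq[where f="tassoc'"]) (auto simp: tassoc'_def bvec_pair)
lemma tmid_sw: "tmid z = sw z (\<lambda>X Y. sw X (\<lambda>p q. sw Y (\<lambda>u v. tensor (tensor p u) (tensor q v))))"
  by (rule lin_eq[where f="tmid"]) (auto simp: tmid_def bvec_pair)
lemma flip3_sw: "reidx (\<lambda>((a, b), c). ((a, c), b)) z = sw z (\<lambda>X w. sw X (\<lambda>u v. tensor (tensor u w) v))"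
  by (rule lin_eq[where f="reidx (\<lambda>((a, b), c). ((a, c), b))"]) (auto simp: bvec_pair)

lemma tensor_mul_sw: "linmap m1 \<Longrightarrow> linmap m2 \<Longrightarrow>
  tensor_mul m1 m2 z = sw z (\<lambda>X Y. sw X (\<lambda>p q. sw Y (\<lambda>u v. tensor (m1 (tensor p u)) (m2 (tensor q v)))))"
  unfolding tensor_mul_def
  by (simp add: tmid_sw tmap_sw sw_sw tensor_sw1 tensor_sw2)

lemma ext1:
  assumes "\<And>a h. f (tensor a h) = g (tensor a h)" "linmap f" "linmap g"
  shows "f x = g x"
  by (rule lin_eq[OF assms(2,3)]) (metis assms(1) bvec_pair old.prod.exhaust)

lemma ext2:
  assumes "\<And>a h b g. F (tensor a h) (tensor b g) = G (tensor a h) (tensor b g)"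
    "\<And>y. linmap (\<lambda>x. F x y)" "\<And>x. linmap (\<lambda>y. F x y)"
    "\<And>y. linmap (\<lambda>x. G x y)" "\<And>x. linmap (\<lambda>y. G x y)"
  shows "F x y = G x y"
proof -
  have *: "F (tensor a h) y = G (tensor a h) y" for a h
    by (rule ext1[where f="\<lambda>y. F (tensor a h) y" and g="\<lambda>y. G (tensor a h) y"]) (use assms in auto)
  show ?thesis
    by (rule ext1[where f="\<lambda>x. F x y" and g="\<lambda>x. G x y"]) (use assms * in auto)
qed

lemma ext3:
  assumes "\<And>a h b g c f. F (tensor a h) (tensor b g) (tensor c f) = G (tensor a h) (tensor b g) (tensor c f)"
    "\<And>y z. linmap (\<lambda>x. F x y z)" "\<And>x z. linmap (\<lambda>y. F x y z)" "\<And>x y. linmap (\<lambda>z. F x y z)"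
    "\<And>y z. linmap (\<lambda>x. G x y z)" "\<And>x z. linmap (\<lambda>y. G x y z)" "\<And>x y. linmap (\<lambda>z. G x y z)"
  shows "F x y z = G x y z"
proof -
  have *: "F (tensor a h) y z = G (tensor a h) y z" for a h
    by (rule ext2[where F="\<lambda>y z. F (tensor a h) y z" and G="\<lambda>y z. G (tensor a h) y z"]) (use assms in auto)
  show ?thesis
    by (rule ext1[where f="\<lambda>x. F x y z" and g="\<lambda>x. G x y z"]) (use assms * in auto)
qed


locale smash =
  fixes muH :: "('i \<times> 'i \<Rightarrow>\<^sub>0 'k::field) \<Rightarrow> ('i \<Rightarrow>\<^sub>0 'k)"
    and deH :: "('i \<Rightarrow>\<^sub>0 'k) \<Rightarrow> ('i \<times> 'i \<Rightarrow>\<^sub>0 'k)"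
    and alH :: "('i \<Rightarrow>\<^sub>0 'k) \<Rightarrow> ('i \<Rightarrow>\<^sub>0 'k)"
    and muA :: "('j \<times> 'j \<Rightarrow>\<^sub>0 'k) \<Rightarrow> ('j \<Rightarrow>\<^sub>0 'k)"
    and alA :: "('j \<Rightarrow>\<^sub>0 'k) \<Rightarrow> ('j \<Rightarrow>\<^sub>0 'k)"
    and act :: "('i \<times> 'j \<Rightarrow>\<^sub>0 'k) \<Rightarrow> ('j \<Rightarrow>\<^sub>0 'k)"
    and la :: "('j \<Rightarrow>\<^sub>0 'k) \<Rightarrow> ('i \<times> 'j \<Rightarrow>\<^sub>0 'k)"
  assumes bialg: "hom_bialgebra muH deH alH"
    and modalg: "module_hom_algebra muH deH alH muA alA act"
    and bH: "bij alH" and bA: "bij alA"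
    and comod: "left_comodule_hom_algebra muH deH alH muA alA la"
    and yd: "yd_module muH deH alH alA act la"
begin

abbreviation "mH x y \<equiv> muH (tensor x y)"
abbreviation "mA x y \<equiv> muA (tensor x y)"
abbreviation "ac h m \<equiv> act (tensor h m)"
abbreviation "bi \<equiv> inv alH"
abbreviation "ai \<equiv> inv alA"

lemma lin_basic: "linmap muH" "linmap deH" "linmap alH" "linmap muA" "linmap alA" "linmap act" "linmap la"
  using bialg modalg comod
  unfolding hom_bialgebra_def hom_assoc_def module_hom_algebra_def left_module_def
    left_comodule_hom_algebra_def left_comodule_def by auto

lemma lin_inv: "linmap f \<Longrightarrow> bij f \<Longrightarrow> linmap (inv f)"
  unfolding linmap_def
proof safe
  assume l: "\<forall>x y. f (x + y) = f x + f y" "\<forall>c x. f (smul c x) = smul c (f x)" and b: "bij f"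
  fix x y c
  show "inv f (x + y) = inv f x + inv f y"
    using l b by (metis bij_inv_eq_iff)
  show "inv f (smul c x) = smul c (inv f x)"
    using l b by (metis bij_inv_eq_iff)
qed

lemma lin_bi: "linmap bi" and lin_ai: "linmap ai"
  using lin_inv lin_basic bH bA by auto

lemmas lin_ops = lin_basic lin_bi lin_ai

lemma lin_muH_arg[simp]: "linmap g \<Longrightarrow> linmap (\<lambda>x. muH (g x))"
  using lin_ops by (auto intro: lin_comp)
lemma lin_deH_arg[simp]: "linmap g \<Longrightarrow> linmap (\<lambda>x. deH (g x))"
  using lin_ops by (auto intro: lin_comp)
lemma lin_alH_arg[simp]: "linmap g \<Longrightarrow> linmap (\<lambda>x. alH (g x))"
  using lin_ops by (auto intro: lin_comp)
lemma lin_muA_arg[simp]: "linmap g \<Longrightarrow> linmap (\<lambda>x. muA (g x))"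
  using lin_ops by (auto intro: lin_comp)
lemma lin_alA_arg[simp]: "linmap g \<Longrightarrow> linmap (\<lambda>x. alA (g x))"
  using lin_ops by (auto intro: lin_comp)
lemma lin_act_arg[simp]: "linmap g \<Longrightarrow> linmap (\<lambda>x. act (g x))"
  using lin_ops by (auto intro: lin_comp)
lemma lin_la_arg[simp]: "linmap g \<Longrightarrow> linmap (\<lambda>x. la (g x))"
  using lin_ops by (auto intro: lin_comp)
lemma lin_bi_arg[simp]: "linmap g \<Longrightarrow> linmap (\<lambda>x. bi (g x))"
  using lin_ops by (auto intro: lin_comp)
lemma lin_ai_arg[simp]: "linmap g \<Longrightarrow> linmap (\<lambda>x. ai (g x))"
  using lin_ops by (auto intro: lin_comp)

lemma lin_ops'[simp]: "linmap muH" "linmap deH" "linmap alH" "linmap muA" "linmap alA" "linmap act" "linmap la"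
  "linmap bi" "linmap ai"
  using lin_ops by auto

lemma sw_muH[simp]: "muH (sw z F) = sw z (\<lambda>p q. muH (F p q))"
  by (simp add: sw_lin)
lemma sw_deH[simp]: "deH (sw z F) = sw z (\<lambda>p q. deH (F p q))"
  by (simp add: sw_lin)
lemma sw_alH[simp]: "alH (sw z F) = sw z (\<lambda>p q. alH (F p q))"
  by (simp add: sw_lin)
lemma sw_muA[simp]: "muA (sw z F) = sw z (\<lambda>p q. muA (F p q))"
  by (simp add: sw_lin)
lemma sw_alA[simp]: "alA (sw z F) = sw z (\<lambda>p q. alA (F p q))"
  by (simp add: sw_lin)
lemma sw_act[simp]: "act (sw z F) = sw z (\<lambda>p q. act (F p q))"
  by (simp add: sw_lin)
lemma sw_la[simp]: "la (sw z F) = sw z (\<lambda>p q. la (F p q))"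
  by (simp add: sw_lin)
lemma sw_bi[simp]: "bi (sw z F) = sw z (\<lambda>p q. bi (F p q))"
  by (simp add: sw_lin)
lemma sw_ai[simp]: "ai (sw z F) = sw z (\<lambda>p q. ai (F p q))"
  by (simp add: sw_lin)

lemmas sw_structs[simp] = sw_sw tensor_sw1 tensor_sw2

lemma inv_simps[simp]: "alH (bi x) = x" "bi (alH x) = x" "alA (ai y) = y" "ai (alA y) = y"
  using bH bA by (auto simp: bij_def surj_f_inv_f)

lemma sw_id'[simp]: "sw z (\<lambda>p q. tensor p q) = z"
  by (simp add: sw_id)

lemma facts_H:
  "alH (mH x y) = mH (alH x) (alH y)"
  "mH (alH x) (mH y z) = mH (mH x y) (alH z)"
  "tassoc (tmap deH alH (deH h)) = tmap alH deH (deH h)"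
  "deH (mH h k) = tensor_mul muH muH (tensor (deH h) (deH k))"
  "deH (alH h) = tmap alH alH (deH h)"
  using bialg unfolding hom_bialgebra_def hom_assoc_def by auto

lemma alH_mH[simp]: "alH (mH x y) = mH (alH x) (alH y)"
  by (rule facts_H)

lemma mH_left[simp]: "mH (mH x y) z = mH (alH x) (mH y (bi z))"
  using facts_H(2)[of x y "bi z"] by simp

lemma deH_mH[simp]: "deH (mH h k) = sw (deH h) (\<lambda>p q. sw (deH k) (\<lambda>u v. tensor (mH p u) (mH q v)))"
  by (simp add: facts_H(4) tensor_mul_sw)

lemma deH_alH[simp]: "deH (alH h) = sw (deH h) (\<lambda>p q. tensor (alH p) (alH q))"
  by (simp add: facts_H(5) tmap_sw)

lemma bi_mH[simp]: "bi (mH x y) = mH (bi x) (bi y)"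
proof -
  have "bi (mH x y) = bi (alH (mH (bi x) (bi y)))" by simp
  then show ?thesis by (simp only: inv_simps)
qed

lemma deH_bi[simp]: "deH (bi h) = sw (deH h) (\<lambda>p q. tensor (bi p) (bi q))"
proof -
  have "sw (deH h) (\<lambda>p q. tensor (bi p) (bi q)) = sw (deH (alH (bi h))) (\<lambda>p q. tensor (bi p) (bi q))"
    by simp
  also have "\<dots> = deH (bi h)"
    by (simp only: deH_alH sw_sw) simp
  finally show ?thesis by simp
qed

lemma facts_A:
  "alA (mA x y) = mA (alA x) (alA y)"
  "mA (alA x) (mA y z) = mA (mA x y) (alA z)"
  "alA (ac h m) = ac (alH h) (alA m)"
  "ac (alH h) (ac h' m) = ac (mH h h') (alA m)"
  "ac (alH (alH h)) (mA a a') = muA (tmap act act (tmid (tensor (deH h) (tensor a a'))))"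
  using modalg unfolding module_hom_algebra_def hom_assoc_def left_module_def by auto

lemma alA_mA[simp]: "alA (mA x y) = mA (alA x) (alA y)"
  by (rule facts_A)

lemma mA_left[simp]: "mA (mA x y) z = mA (alA x) (mA y (ai z))"
  using facts_A(2)[of x y "ai z"] by simp

lemma ai_mA[simp]: "ai (mA x y) = mA (ai x) (ai y)"
proof -
  have "ai (mA x y) = ai (alA (mA (ai x) (ai y)))" by simp
  then show ?thesis by (simp only: inv_simps)
qed

lemma alA_ac[simp]: "alA (ac h m) = ac (alH h) (alA m)"
  by (rule facts_A)

lemma ai_ac[simp]: "ai (ac h m) = ac (bi h) (ai m)"
proof -
  have "ai (ac h m) = ai (alA (ac (bi h) (ai m)))" by simp
  then show ?thesis by (simp only: inv_simps)
qed

lemma ac_ac[simp]: "ac h (ac h' m) = ac (mH (bi h) h') (alA m)"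
  using facts_A(4)[of "bi h" h' m] by simp

lemma ac_mA[simp]: "ac h (mA a a') = sw (deH (bi (bi h))) (\<lambda>p q. mA (ac p a) (ac q a'))"
  using facts_A(5)[of "bi (bi h)" a a'] by (simp add: tmid_sw tmap_sw del: deH_bi)

lemma facts_L:
  "tmap alH alA (la m) = la (alA m)"
  "tassoc (tmap deH alA (la m)) = tmap alH la (la m)"
  "la (mA a a') = tensor_mul muH muA (tensor (la a) (la a'))"
  using comod unfolding left_comodule_hom_algebra_def left_comodule_def hom_alg_morphism_def by meson+

lemma la_alA[simp]: "la (alA m) = sw (la m) (\<lambda>p q. tensor (alH p) (alA q))"
  by (simp add: facts_L(1)[symmetric] tmap_sw)

lemma la_ai[simp]: "la (ai m) = sw (la m) (\<lambda>p q. tensor (bi p) (ai q))"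
proof -
  have "sw (la m) (\<lambda>p q. tensor (bi p) (ai q)) = sw (la (alA (ai m))) (\<lambda>p q. tensor (bi p) (ai q))"
    by simp
  also have "\<dots> = la (ai m)"
    by (simp only: la_alA sw_sw) simp
  finally show ?thesis by simp
qed

lemma la_mA[simp]: "la (mA a a') = sw (la a) (\<lambda>p q. sw (la a') (\<lambda>u v. tensor (mH p u) (mA q v)))"
  by (simp add: facts_L(3) tensor_mul_sw)


lemma coassoc_sw:
  assumes "\<And>v w. linmap (\<lambda>u. G u v w)" "\<And>u w. linmap (\<lambda>v. G u v w)" "\<And>u v. linmap (\<lambda>w. G u v w)"
  shows "sw (deH h) (\<lambda>p r. sw (deH p) (\<lambda>u v. G u v (alH r))) = sw (deH h) (\<lambda>p r. sw (deH r) (\<lambda>v w. G (alH p) v w))"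
proof -
  have "sw (tassoc (tmap deH alH (deH h))) (\<lambda>u Y. sw Y (\<lambda>v w. G u v w)) = sw (tmap alH deH (deH h)) (\<lambda>u Y. sw Y (\<lambda>v w. G u v w))"
    by (simp only: facts_H(3))
  from this show ?thesis by (simp add: tassoc_sw tmap_sw assms)
qed

lemma cocoassoc_sw:
  assumes "\<And>v w. linmap (\<lambda>u. G u v w)" "\<And>u w. linmap (\<lambda>v. G u v w)" "\<And>u v. linmap (\<lambda>w. G u v w)"
  shows "sw (la m) (\<lambda>p r. sw (deH p) (\<lambda>u v. G u v (alA r))) = sw (la m) (\<lambda>p r. sw (la r) (\<lambda>v w. G (alH p) v w))"
proof -
  have "sw (tassoc (tmap deH alA (la m))) (\<lambda>u Y. sw Y (\<lambda>v w. G u v w)) = sw (tmap alH la (la m)) (\<lambda>u Y. sw Y (\<lambda>v w. G u v w))"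
    by (simp only: facts_L(2))
  from this show ?thesis by (simp add: tassoc_sw tmap_sw assms)
qed

lemma coassoc_sw_ctx:
  assumes "\<And>x y v w. linmap (\<lambda>u. G x y u v w)" "\<And>x y u w. linmap (\<lambda>v. G x y u v w)" "\<And>x y u v. linmap (\<lambda>w. G x y u v w)"
  shows "sw z (\<lambda>x y. sw (deH h) (\<lambda>p r. sw (deH p) (\<lambda>u v. G x y u v (alH r)))) = sw z (\<lambda>x y. sw (deH h) (\<lambda>p r. sw (deH r) (\<lambda>v w. G x y (alH p) v w)))"
  by (rule sw_cong, rule coassoc_sw) (use assms in auto)

lemma lin_idfun[simp]: "linmap id"
  by (simp add: linmap_def)
lemma lin_o[simp]: "linmap f \<Longrightarrow> linmap g \<Longrightarrow> linmap (f \<circ> g)"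
  unfolding o_def by (rule lin_comp)

lemma yd_raw:
  "sw (deH h) (\<lambda>u v. sw (la (ac u m)) (\<lambda>x z. tensor (mH x (alH (alH v))) z))
   = sw (deH h) (\<lambda>p q. sw (la m) (\<lambda>u v. tensor (mH (alH (alH p)) (alH u)) (ac (alH q) v)))"
proof -
  have "\<forall>h m.
        tmap muH id
          (reidx (\<lambda>((x, z), y). ((x, y), z))
            (tmap la id
              (tmap act (alH \<circ> alH)
                (reidx (\<lambda>((a, b), c). ((a, c), b)) (tensor (deH h) m)))))
      = tmap (\<lambda>u. muH (tmap (alH \<circ> alH) alH u)) (\<lambda>v. act (tmap alH id v))
          (tmid (tensor (deH h) (la m)))"
    using yd unfolding yd_module_def by blast
  then have "tmap muH id
          (reidx (\<lambda>((x, z), y). ((x, y), z))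
            (tmap la id
              (tmap act (alH \<circ> alH)
                (reidx (\<lambda>((a, b), c). ((a, c), b)) (tensor (deH h) m)))))
      = tmap (\<lambda>u. muH (tmap (alH \<circ> alH) alH u)) (\<lambda>v. act (tmap alH id v))
          (tmid (tensor (deH h) (la m)))" by blast
  from this show ?thesis
    by (simp add: tmap_sw flip3_sw tmid_sw)
qed

lemma yd_sw:
  assumes "\<And>y. linmap (\<lambda>x. F x y)" "\<And>x. linmap (\<lambda>y. F x y)"
  shows "sw (deH h) (\<lambda>u v. sw (la (ac u m)) (\<lambda>x z. F (mH x (alH (alH v))) z))
   = sw (deH h) (\<lambda>p q. sw (la m) (\<lambda>u v. F (mH (alH (alH p)) (alH u)) (ac (alH q) v)))"
proof -
  have "sw (sw (deH h) (\<lambda>u v. sw (la (ac u m)) (\<lambda>x z. tensor (mH x (alH (alH v))) z))) F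
   = sw (sw (deH h) (\<lambda>p q. sw (la m) (\<lambda>u v. tensor (mH (alH (alH p)) (alH u)) (ac (alH q) v)))) F"
    by (simp only: yd_raw)
  from this show ?thesis by (simp add: assms)
qed


abbreviation "M \<equiv> smash_mul muH deH alH muA alA act"
abbreviation "AL \<equiv> tmap alA alH"
abbreviation "LA \<equiv> smash_lambda muH deH la"
abbreviation "RH \<equiv> smash_rho deH alA"

lemma lin_M[simp]: "linmap M" by (simp add: smash_mul_def)
lemma lin_LA[simp]: "linmap LA" unfolding smash_lambda_def by (rule lin_tmap_arg) simp
lemma lin_RH[simp]: "linmap RH" unfolding smash_rho_def by (rule lin_comp) simp_all

lemma lin_M_arg[simp]: "linmap g \<Longrightarrow> linmap (\<lambda>x. M (g x))" by (rule lin_comp) simp_all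
lemma lin_LA_arg[simp]: "linmap g \<Longrightarrow> linmap (\<lambda>x. LA (g x))" by (rule lin_comp) simp_all
lemma lin_RH_arg[simp]: "linmap g \<Longrightarrow> linmap (\<lambda>x. RH (g x))" by (rule lin_comp) simp_all

lemma sw_M[simp]: "M (sw z F) = sw z (\<lambda>p q. M (F p q))" by (simp add: sw_lin)
lemma sw_LA[simp]: "LA (sw z F) = sw z (\<lambda>p q. LA (F p q))" by (simp add: sw_lin)
lemma sw_RH[simp]: "RH (sw z F) = sw z (\<lambda>p q. RH (F p q))" by (simp add: sw_lin)

definition SM where
  "SM a h b g = sw (deH h) (\<lambda>p q. tensor (mA a (ac (bi (bi p)) (ai b))) (mH (bi q) g))"

lemma M_sw: "M (tensor X Y) = sw X (\<lambda>a h. sw Y (\<lambda>b g. SM a h b g))"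
proof (rule lin_eq2[where F="\<lambda>X Y. M (tensor X Y)"])
  fix i j :: "'j \<times> 'i"
  obtain a h where i: "i = (a, h)" by (cases i)
  obtain b g where j: "j = (b, g)" by (cases j)
  have "M (tensor (bvec i) (bvec j)) = M (bvec (i, j))" by (simp only: bvec_pair)
  also have "\<dots> = SM (bvec a) (bvec h) (bvec b) (bvec g)"
    by (simp add: smash_mul_def smash_term_def SM_def i j tmap_sw)
  finally show "M (tensor (bvec i) (bvec j)) = sw (bvec i) (\<lambda>a h. sw (bvec j) (\<lambda>b g. SM a h b g))"
    by (simp add: i j)
qed (simp_all add: SM_def)

lemma M_tensor[simp]: "M (tensor (tensor a h) (tensor b g)) =
   sw (deH h) (\<lambda>p q. tensor (mA a (ac (bi (bi p)) (ai b))) (mH (bi q) g))"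
  by (simp add: M_sw SM_def)

lemma AL_tensor[simp]: "AL (tensor a h) = tensor (alA a) (alH h)"
  by (simp add: tmap_sw)

lemma LA_tensor[simp]: "LA (tensor a h) = sw (la a) (\<lambda>u v. sw (deH h) (\<lambda>s t. tensor (mH u s) (tensor v t)))"
  by (simp add: smash_lambda_def tmap_sw tmid_sw)

lemma RH_tensor[simp]: "RH (tensor a h) = sw (deH h) (\<lambda>s t. tensor (tensor (alA a) s) t)"
  by (simp add: smash_rho_def tmap_sw tassoc'_sw)

lemma G1: "AL (M (tensor (tensor a h) (tensor b g))) = M (tensor (AL (tensor a h)) (AL (tensor b g)))"
  by (simp add: tmap_sw)

lemma G3: "tmap alH AL (LA (tensor a h)) = LA (AL (tensor a h))"
  by (simp add: tmap_sw)

lemma G7: "tmap AL alH (RH (tensor a h)) = RH (AL (tensor a h))"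
  by (simp add: tmap_sw)


lemma sw_collapse[simp]:
  "sw z (\<lambda>v w. tensor X (tensor v w)) = tensor X z"
  "sw z (\<lambda>v w. tensor (tensor v w) X) = tensor z X"
  by (simp_all add: tensor_sw1[symmetric] tensor_sw2[symmetric] del: tensor_sw1 tensor_sw2)

end
context smash begin

lemma G8: "tmap AL deH (RH (tensor a h)) = tassoc (tmap RH alH (RH (tensor a h)))"
proof -
  have "tassoc (tmap RH alH (RH (tensor a h))) =
    sw (deH h) (\<lambda>p r. sw (deH p) (\<lambda>u v. tensor (tensor (alA (alA a)) u) (tensor v (alH r))))"
    by (simp add: tmap_sw tassoc_sw)
  also have "\<dots> = sw (deH h) (\<lambda>p r. sw (deH r) (\<lambda>v w. tensor (tensor (alA (alA a)) (alH p)) (tensor v w)))"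
    by (rule coassoc_sw[where G="\<lambda>u v w. tensor (tensor (alA (alA a)) u) (tensor v w)"]) simp_all
  also have "\<dots> = tmap AL deH (RH (tensor a h))"
    by (simp add: tmap_sw)
  finally show ?thesis by simp
qed

lemma G10: "tassoc (tmap LA alH (RH (tensor a h))) = tmap alH RH (LA (tensor a h))"
proof -
  have "tassoc (tmap LA alH (RH (tensor a h))) =
    sw (la a) (\<lambda>x y. sw (deH h) (\<lambda>p r. sw (deH p) (\<lambda>u v. tensor (mH (alH x) u) (tensor (tensor (alA y) v) (alH r)))))"
    by (simp add: tmap_sw tassoc_sw) (rule sw_swap)
  also have "\<dots> = sw (la a) (\<lambda>x y. sw (deH h) (\<lambda>p r. sw (deH r) (\<lambda>v w. tensor (mH (alH x) (alH p)) (tensor (tensor (alA y) v) w))))"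
    by (rule coassoc_sw_ctx[where G="\<lambda>x y u v w. tensor (mH (alH x) u) (tensor (tensor (alA y) v) w)"]) simp_all
  also have "\<dots> = tmap alH RH (LA (tensor a h))"
    by (simp add: tmap_sw)
  finally show ?thesis .
qed

lemma G4: "tassoc (tmap deH AL (LA (tensor a h))) = tmap alH LA (LA (tensor a h))"
proof -
  have X: "sw (deH h) (\<lambda>s t. sw (deH s) (\<lambda>s1 s2. tensor (mH u1 s1) (tensor (mH u2 s2) (tensor (alA v) (alH t)))))
     = sw (deH h) (\<lambda>s t. sw (deH t) (\<lambda>s1 s2. tensor (mH u1 (alH s)) (tensor (mH u2 s1) (tensor (alA v) s2))))" for u1 u2 v
    by (rule coassoc_sw[where G="\<lambda>s1 s2 w. tensor (mH u1 s1) (tensor (mH u2 s2) (tensor (alA v) w))"]) simp_all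
  have Y: "sw (la a) (\<lambda>u v. sw (deH u) (\<lambda>u1 u2. sw (deH h) (\<lambda>s t. sw (deH t) (\<lambda>s1 s2. tensor (mH u1 (alH s)) (tensor (mH u2 s1) (tensor (alA v) s2))))))
    = sw (la a) (\<lambda>u v. sw (la v) (\<lambda>x y. sw (deH h) (\<lambda>s t. sw (deH t) (\<lambda>s1 s2. tensor (mH (alH u) (alH s)) (tensor (mH x s1) (tensor y s2))))))"
    by (rule cocoassoc_sw[where G="\<lambda>u1 u2 w. sw (deH h) (\<lambda>s t. sw (deH t) (\<lambda>s1 s2. tensor (mH u1 (alH s)) (tensor (mH u2 s1) (tensor w s2))))"]) simp_all
  have "tassoc (tmap deH AL (LA (tensor a h))) =
    sw (la a) (\<lambda>u v. sw (deH h) (\<lambda>s t. sw (deH u) (\<lambda>u1 u2. sw (deH s) (\<lambda>s1 s2. tensor (mH u1 s1) (tensor (mH u2 s2) (tensor (alA v) (alH t)))))))"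
    by (simp add: tmap_sw tassoc_sw)
  also have "\<dots> = sw (la a) (\<lambda>u v. sw (deH u) (\<lambda>u1 u2. sw (deH h) (\<lambda>s t. sw (deH s) (\<lambda>s1 s2. tensor (mH u1 s1) (tensor (mH u2 s2) (tensor (alA v) (alH t)))))))"
    by (rule sw_cong, rule sw_swap)
  also have "\<dots> = sw (la a) (\<lambda>u v. sw (deH u) (\<lambda>u1 u2. sw (deH h) (\<lambda>s t. sw (deH t) (\<lambda>s1 s2. tensor (mH u1 (alH s)) (tensor (mH u2 s1) (tensor (alA v) s2))))))"
    by (simp only: X)
  also have "\<dots> = sw (la a) (\<lambda>u v. sw (la v) (\<lambda>x y. sw (deH h) (\<lambda>s t. sw (deH t) (\<lambda>s1 s2. tensor (mH (alH u) (alH s)) (tensor (mH x s1) (tensor y s2))))))"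
    by (rule Y)
  also have "\<dots> = sw (la a) (\<lambda>u v. sw (deH h) (\<lambda>s t. sw (la v) (\<lambda>x y. sw (deH t) (\<lambda>s1 s2. tensor (mH (alH u) (alH s)) (tensor (mH x s1) (tensor y s2))))))"
    by (rule sw_cong, rule sw_swap)
  also have "\<dots> = tmap alH LA (LA (tensor a h))"
    by (simp add: tmap_sw)
  finally show ?thesis .
qed

lemma G9: "RH (M (tensor (tensor a h) (tensor b g))) = tensor_mul M muH (tensor (RH (tensor a h)) (RH (tensor b g)))"
proof -
  have X: "sw (deH h) (\<lambda>s r. sw (deH s) (\<lambda>u v. tensor (tensor (mA (alA a) (ac (bi (bi u)) b)) (mH (bi v) p)) (mH r q)))
    = sw (deH h) (\<lambda>s r. sw (deH r) (\<lambda>v w. tensor (tensor (mA (alA a) (ac (bi s) b)) (mH (bi v) p)) (mH (bi w) q)))" for p q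
    using coassoc_sw[where G="\<lambda>u v w. tensor (tensor (mA (alA a) (ac (bi (bi u)) b)) (mH (bi v) p)) (mH (bi w) q)" and h=h]
    by simp
  have "tensor_mul M muH (tensor (RH (tensor a h)) (RH (tensor b g))) =
     sw (deH g) (\<lambda>p q. sw (deH h) (\<lambda>s r. sw (deH s) (\<lambda>u v. tensor (tensor (mA (alA a) (ac (bi (bi u)) b)) (mH (bi v) p)) (mH r q))))"
    by (simp add: tensor_mul_sw)
  also have "\<dots> = sw (deH g) (\<lambda>p q. sw (deH h) (\<lambda>s r. sw (deH r) (\<lambda>v w. tensor (tensor (mA (alA a) (ac (bi s) b)) (mH (bi v) p)) (mH (bi w) q))))"
    by (simp only: X)
  also have "\<dots> = sw (deH h) (\<lambda>s r. sw (deH g) (\<lambda>p q. sw (deH r) (\<lambda>v w. tensor (tensor (mA (alA a) (ac (bi s) b)) (mH (bi v) p)) (mH (bi w) q))))"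
    by (rule sw_swap)
  also have "\<dots> = sw (deH h) (\<lambda>s r. sw (deH r) (\<lambda>v w. sw (deH g) (\<lambda>p q. tensor (tensor (mA (alA a) (ac (bi s) b)) (mH (bi v) p)) (mH (bi w) q))))"
    by (rule sw_cong, rule sw_swap)
  also have "\<dots> = RH (M (tensor (tensor a h) (tensor b g)))"
    by (simp add: tmap_sw)
  finally show ?thesis ..
qed

lemma G2: "M (tensor (AL (tensor a h)) (M (tensor (tensor b g) (tensor c f)))) = M (tensor (M (tensor (tensor a h) (tensor b g))) (AL (tensor c f)))"
proof -
  have X: "sw (deH h) (\<lambda>s r. sw (deH s) (\<lambda>u v. tensor (mA (alA a) (mA (ac (bi (bi (bi u))) (ai b)) (ac (mH (bi (bi (bi (bi v)))) (bi (bi (bi p)))) (ai c)))) (mH r (mH (bi q) f))))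
    = sw (deH h) (\<lambda>s r. sw (deH r) (\<lambda>v w. tensor (mA (alA a) (mA (ac (bi (bi s)) (ai b)) (ac (mH (bi (bi (bi (bi v)))) (bi (bi (bi p)))) (ai c)))) (mH (bi w) (mH (bi q) f))))" for p q
    using coassoc_sw[where G="\<lambda>u v w. tensor (mA (alA a) (mA (ac (bi (bi (bi u))) (ai b)) (ac (mH (bi (bi (bi (bi v)))) (bi (bi (bi p)))) (ai c)))) (mH (bi w) (mH (bi q) f))" and h=h]
    by simp
  have "M (tensor (AL (tensor a h)) (M (tensor (tensor b g) (tensor c f)))) =
     sw (deH g) (\<lambda>p q. sw (deH h) (\<lambda>s r. sw (deH s) (\<lambda>u v. tensor (mA (alA a) (mA (ac (bi (bi (bi u))) (ai b)) (ac (mH (bi (bi (bi (bi v)))) (bi (bi (bi p)))) (ai c)))) (mH r (mH (bi q) f)))))"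
    by simp
  also have "\<dots> = sw (deH g) (\<lambda>p q. sw (deH h) (\<lambda>s r. sw (deH r) (\<lambda>v w. tensor (mA (alA a) (mA (ac (bi (bi s)) (ai b)) (ac (mH (bi (bi (bi (bi v)))) (bi (bi (bi p)))) (ai c)))) (mH (bi w) (mH (bi q) f)))))"
    by (simp only: X)
  also have "\<dots> = sw (deH h) (\<lambda>s r. sw (deH g) (\<lambda>p q. sw (deH r) (\<lambda>v w. tensor (mA (alA a) (mA (ac (bi (bi s)) (ai b)) (ac (mH (bi (bi (bi (bi v)))) (bi (bi (bi p)))) (ai c)))) (mH (bi w) (mH (bi q) f)))))"
    by (rule sw_swap)
  also have "\<dots> = sw (deH h) (\<lambda>s r. sw (deH r) (\<lambda>v w. sw (deH g) (\<lambda>p q. tensor (mA (alA a) (mA (ac (bi (bi s)) (ai b)) (ac (mH (bi (bi (bi (bi v)))) (bi (bi (bi p)))) (ai c)))) (mH (bi w) (mH (bi q) f)))))"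
    by (rule sw_cong, rule sw_swap)
  also have "\<dots> = M (tensor (M (tensor (tensor a h) (tensor b g))) (AL (tensor c f)))"
    by simp
  finally show ?thesis .
qed

lemma G6: "LA (M (tensor (tensor a h) (tensor b g))) = tensor_mul muH M (tensor (LA (tensor a h)) (LA (tensor b g)))"
proof -
  define F where "F = (\<lambda>h2 W z. sw (la a) (\<lambda>a1 a0. sw (deH g) (\<lambda>g1 g2. tensor (mH (alH a1) (mH (bi W) g1)) (tensor (mA a0 z) (mH h2 g2)))))"
  have YD: "sw (deH (bi (bi (bi k)))) (\<lambda>u v. sw (la (ac u (ai b))) (\<lambda>x z. F h2 (mH x (alH (alH v))) z))
    = sw (deH (bi (bi (bi k)))) (\<lambda>p q. sw (la (ai b)) (\<lambda>u v. F h2 (mH (alH (alH p)) (alH u)) (ac (alH q) v)))" for k h2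
    by (rule yd_sw) (simp_all add: F_def)
  have "LA (M (tensor (tensor a h) (tensor b g))) = sw (deH h) (\<lambda>p q. sw (la a) (\<lambda>a1 a0. sw (la (ac (bi (bi p)) (ai b))) (\<lambda>x1 x0. sw (deH q) (\<lambda>q1 q2. sw (deH g) (\<lambda>g1 g2. tensor (mH (alH a1) (mH x1 (mH (bi (bi q1)) (bi g1)))) (tensor (mA a0 x0) (mH (bi q2) g2)))))))"
    by simp
  also have "\<dots> = sw (deH h) (\<lambda>p q. sw (la a) (\<lambda>a1 a0. sw (deH q) (\<lambda>q1 q2. sw (la (ac (bi (bi p)) (ai b))) (\<lambda>x1 x0. sw (deH g) (\<lambda>g1 g2. tensor (mH (alH a1) (mH x1 (mH (bi (bi q1)) (bi g1)))) (tensor (mA a0 x0) (mH (bi q2) g2)))))))"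
    by (rule sw_cong, rule sw_cong, rule sw_swap)
  also have "\<dots> = sw (deH h) (\<lambda>p q. sw (deH q) (\<lambda>q1 q2. sw (la a) (\<lambda>a1 a0. sw (la (ac (bi (bi p)) (ai b))) (\<lambda>x1 x0. sw (deH g) (\<lambda>g1 g2. tensor (mH (alH a1) (mH x1 (mH (bi (bi q1)) (bi g1)))) (tensor (mA a0 x0) (mH (bi q2) g2)))))))"
    by (rule sw_cong, rule sw_swap)
  also have "\<dots> = sw (deH h) (\<lambda>k h2. sw (deH k) (\<lambda>k1 k2. sw (la a) (\<lambda>a1 a0. sw (la (ac (bi (bi (bi k1))) (ai b))) (\<lambda>x1 x0. sw (deH g) (\<lambda>g1 g2. tensor (mH (alH a1) (mH x1 (mH (bi (bi k2)) (bi g1)))) (tensor (mA a0 x0) (mH h2 g2)))))))"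
    using coassoc_sw[where G="\<lambda>u v w. sw (la a) (\<lambda>a1 a0. sw (la (ac (bi (bi (bi u))) (ai b))) (\<lambda>x1 x0. sw (deH g) (\<lambda>g1 g2. tensor (mH (alH a1) (mH x1 (mH (bi (bi v)) (bi g1)))) (tensor (mA a0 x0) (mH (bi w) g2)))))" and h=h] by simp
  also have "\<dots> = sw (deH h) (\<lambda>k h2. sw (deH k) (\<lambda>k1 k2. sw (la (ac (bi (bi (bi k1))) (ai b))) (\<lambda>x1 x0. sw (la a) (\<lambda>a1 a0. sw (deH g) (\<lambda>g1 g2. tensor (mH (alH a1) (mH x1 (mH (bi (bi k2)) (bi g1)))) (tensor (mA a0 x0) (mH h2 g2)))))))"
    by (rule sw_cong, rule sw_cong, rule sw_swap)
  also have "\<dots> = sw (deH h) (\<lambda>k h2. sw (deH (bi (bi (bi k)))) (\<lambda>u v. sw (la (ac u (ai b))) (\<lambda>x z. F h2 (mH x (alH (alH v))) z)))"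
    by (simp add: F_def)
  also have "\<dots> = sw (deH h) (\<lambda>k h2. sw (deH (bi (bi (bi k)))) (\<lambda>p q. sw (la (ai b)) (\<lambda>u v. F h2 (mH (alH (alH p)) (alH u)) (ac (alH q) v))))"
    by (simp only: YD)
  also have "\<dots> = sw (deH h) (\<lambda>k h2. sw (deH k) (\<lambda>k1 k2. sw (la b) (\<lambda>b1 b0. sw (la a) (\<lambda>a1 a0. sw (deH g) (\<lambda>g1 g2. tensor (mH (alH a1) (mH (bi k1) (mH (bi b1) (bi g1)))) (tensor (mA a0 (ac (bi (bi k2)) (ai b0))) (mH h2 g2)))))))"
    by (simp add: F_def)
  also have "\<dots> = sw (deH h) (\<lambda>s r. sw (deH r) (\<lambda>v w. sw (la b) (\<lambda>b1 b0. sw (la a) (\<lambda>a1 a0. sw (deH g) (\<lambda>g1 g2. tensor (mH (alH a1) (mH s (mH (bi b1) (bi g1)))) (tensor (mA a0 (ac (bi (bi v)) (ai b0))) (mH (bi w) g2)))))))"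
    using coassoc_sw[where G="\<lambda>u v w. sw (la b) (\<lambda>b1 b0. sw (la a) (\<lambda>a1 a0. sw (deH g) (\<lambda>g1 g2. tensor (mH (alH a1) (mH (bi u) (mH (bi b1) (bi g1)))) (tensor (mA a0 (ac (bi (bi v)) (ai b0))) (mH (bi w) g2)))))" and h=h] by simp
  also have "\<dots> = sw (deH h) (\<lambda>s r. sw (la b) (\<lambda>b1 b0. sw (deH r) (\<lambda>v w. sw (la a) (\<lambda>a1 a0. sw (deH g) (\<lambda>g1 g2. tensor (mH (alH a1) (mH s (mH (bi b1) (bi g1)))) (tensor (mA a0 (ac (bi (bi v)) (ai b0))) (mH (bi w) g2)))))))"
    by (rule sw_cong, rule sw_swap)
  also have "\<dots> = sw (la b) (\<lambda>b1 b0. sw (deH h) (\<lambda>s r. sw (deH r) (\<lambda>v w. sw (la a) (\<lambda>a1 a0. sw (deH g) (\<lambda>g1 g2. tensor (mH (alH a1) (mH s (mH (bi b1) (bi g1)))) (tensor (mA a0 (ac (bi (bi v)) (ai b0))) (mH (bi w) g2)))))))"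
    by (rule sw_swap)
  also have "\<dots> = sw (la b) (\<lambda>b1 b0. sw (deH h) (\<lambda>s r. sw (deH r) (\<lambda>v w. sw (deH g) (\<lambda>g1 g2. sw (la a) (\<lambda>a1 a0. tensor (mH (alH a1) (mH s (mH (bi b1) (bi g1)))) (tensor (mA a0 (ac (bi (bi v)) (ai b0))) (mH (bi w) g2)))))))"
    by (rule sw_cong, rule sw_cong, rule sw_cong, rule sw_swap)
  also have "\<dots> = sw (la b) (\<lambda>b1 b0. sw (deH h) (\<lambda>s r. sw (deH g) (\<lambda>g1 g2. sw (deH r) (\<lambda>v w. sw (la a) (\<lambda>a1 a0. tensor (mH (alH a1) (mH s (mH (bi b1) (bi g1)))) (tensor (mA a0 (ac (bi (bi v)) (ai b0))) (mH (bi w) g2)))))))"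
    by (rule sw_cong, rule sw_cong, rule sw_swap)
  also have "\<dots> = sw (la b) (\<lambda>b1 b0. sw (deH g) (\<lambda>g1 g2. sw (deH h) (\<lambda>s r. sw (deH r) (\<lambda>v w. sw (la a) (\<lambda>a1 a0. tensor (mH (alH a1) (mH s (mH (bi b1) (bi g1)))) (tensor (mA a0 (ac (bi (bi v)) (ai b0))) (mH (bi w) g2)))))))"
    by (rule sw_cong, rule sw_swap)
  also have "\<dots> = sw (la b) (\<lambda>b1 b0. sw (deH g) (\<lambda>g1 g2. sw (deH h) (\<lambda>s r. sw (la a) (\<lambda>a1 a0. sw (deH r) (\<lambda>v w. tensor (mH (alH a1) (mH s (mH (bi b1) (bi g1)))) (tensor (mA a0 (ac (bi (bi v)) (ai b0))) (mH (bi w) g2)))))))"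
    by (rule sw_cong, rule sw_cong, rule sw_cong, rule sw_swap)
  also have "\<dots> = sw (la b) (\<lambda>b1 b0. sw (deH g) (\<lambda>g1 g2. sw (la a) (\<lambda>a1 a0. sw (deH h) (\<lambda>s r. sw (deH r) (\<lambda>v w. tensor (mH (alH a1) (mH s (mH (bi b1) (bi g1)))) (tensor (mA a0 (ac (bi (bi v)) (ai b0))) (mH (bi w) g2)))))))"
    by (rule sw_cong, rule sw_cong, rule sw_swap)
  also have "\<dots> = tensor_mul muH M (tensor (LA (tensor a h)) (LA (tensor b g)))"
    by (simp add: tensor_mul_sw)
  finally show ?thesis .
qed

lemma main: "bicomodule_hom_algebra muH deH alH M AL LA RH"
proof -
  have A1: "AL (M (tensor x y)) = M (tensor (AL x) (AL y))" for x y
    by (rule ext2[where F="\<lambda>x y. AL (M (tensor x y))" and G="\<lambda>x y. M (tensor (AL x) (AL y))"], rule G1) simp_all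
  have A2: "M (tensor (AL x) (M (tensor y z))) = M (tensor (M (tensor x y)) (AL z))" for x y z
    by (rule ext3[where F="\<lambda>x y z. M (tensor (AL x) (M (tensor y z)))" and G="\<lambda>x y z. M (tensor (M (tensor x y)) (AL z))"], rule G2) simp_all
  have HA: "hom_assoc M AL"
    unfolding hom_assoc_def using A1 A2 by simp
  have L3: "tmap alH AL (LA m) = LA (AL m)" for m
    by (rule ext1[where f="\<lambda>m. tmap alH AL (LA m)" and g="\<lambda>m. LA (AL m)"], rule G3) simp_all
  have L4: "tassoc (tmap deH AL (LA m)) = tmap alH LA (LA m)" for m
    by (rule ext1[where f="\<lambda>m. tassoc (tmap deH AL (LA m))" and g="\<lambda>m. tmap alH LA (LA m)"], rule G4) simp_all
  have L6: "LA (M (tensor x y)) = tensor_mul muH M (tensor (LA x) (LA y))" for x y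
    by (rule ext2[where F="\<lambda>x y. LA (M (tensor x y))" and G="\<lambda>x y. tensor_mul muH M (tensor (LA x) (LA y))"], rule G6)
      (simp_all add: tensor_mul_def)
  have R7: "tmap AL alH (RH m) = RH (AL m)" for m
    by (rule ext1[where f="\<lambda>m. tmap AL alH (RH m)" and g="\<lambda>m. RH (AL m)"], rule G7) simp_all
  have R8: "tmap AL deH (RH m) = tassoc (tmap RH alH (RH m))" for m
    by (rule ext1[where f="\<lambda>m. tmap AL deH (RH m)" and g="\<lambda>m. tassoc (tmap RH alH (RH m))"], rule G8) simp_all
  have R9: "RH (M (tensor x y)) = tensor_mul M muH (tensor (RH x) (RH y))" for x y
    by (rule ext2[where F="\<lambda>x y. RH (M (tensor x y))" and G="\<lambda>x y. tensor_mul M muH (tensor (RH x) (RH y))"], rule G9)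
      (simp_all add: tensor_mul_def)
  have B10: "tassoc (tmap LA alH (RH m)) = tmap alH RH (LA m)" for m
    by (rule ext1[where f="\<lambda>m. tassoc (tmap LA alH (RH m))" and g="\<lambda>m. tmap alH RH (LA m)"], rule G10) simp_all
  have LC: "left_comodule deH alH AL LA"
    unfolding left_comodule_def using L3 L4 by simp
  have RC: "right_comodule deH alH AL RH"
    unfolding right_comodule_def using R7 R8 by simp
  show ?thesis
    unfolding bicomodule_hom_algebra_def left_comodule_hom_algebra_def right_comodule_hom_algebra_def
      bicomodule_def hom_alg_morphism_def
    using HA LC RC L3 L6 R7 R9 B10 by simp
qed

end

theorem proposition3p9:
  fixes muH :: "('i \<times> 'i \<Rightarrow>\<^sub>0 'k::field) \<Rightarrow> ('i \<Rightarrow>\<^sub>0 'k)"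
    and deH :: "('i \<Rightarrow>\<^sub>0 'k) \<Rightarrow> ('i \<times> 'i \<Rightarrow>\<^sub>0 'k)"
    and alH :: "('i \<Rightarrow>\<^sub>0 'k) \<Rightarrow> ('i \<Rightarrow>\<^sub>0 'k)"
    and muA :: "('j \<times> 'j \<Rightarrow>\<^sub>0 'k) \<Rightarrow> ('j \<Rightarrow>\<^sub>0 'k)"
    and alA :: "('j \<Rightarrow>\<^sub>0 'k) \<Rightarrow> ('j \<Rightarrow>\<^sub>0 'k)"
    and act :: "('i \<times> 'j \<Rightarrow>\<^sub>0 'k) \<Rightarrow> ('j \<Rightarrow>\<^sub>0 'k)"
    and la :: "('j \<Rightarrow>\<^sub>0 'k) \<Rightarrow> ('i \<times> 'j \<Rightarrow>\<^sub>0 'k)"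
  assumes "hom_bialgebra muH deH alH"
    and "module_hom_algebra muH deH alH muA alA act"
    and "bij alH" and "bij alA"
    and "left_comodule_hom_algebra muH deH alH muA alA la"
    and "yd_module muH deH alH alA act la"
  shows "bicomodule_hom_algebra muH deH alH
           (smash_mul muH deH alH muA alA act) (tmap alA alH)
           (smash_lambda muH deH la) (smash_rho deH alA)"
proof -
  interpret smash muH deH alH muA alA act la
    by (rule smash.intro) (fact assms)+
  show ?thesis by (rule main)
qed

end
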